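(* Let $n\ge 3$ and let $G$ be a unicyclic graph on $n$ vertices. (1) $\mathrm{irr}_t(G)\ge 0$, with equality if and only if $G\cong C_n$. (2) If moreover $n\ge 4$ and $G\not\cong C_n$, then $\mathrm{irr}_t(G)\ge 2n-2$. Equality holds if and only if the degree sequence of $G$ is $(3,2,\ldots,2,1)$, i.e. one vertex of degree $3$, $n-2$ vertices of degree $2$ and one vertex of degree $1$.
   Context: A unicyclic graph is a simple connected graph whose number of edges equals its number of vertices. For a graph $G=(V,E)$ and $w\in V$, $d_G(w)$ is the degree of $w$. The total irregularity is $\mathrm{irr}_t(G)=\frac12\sum_{x,y\in V}|d_G(x)-d_G(y)|$, where the sum runs over all ordered pairs of vertices. $C_n$ is the cycle on $n$ vertices. Degree sequences are listed in nonincreasing order. *)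

theory Defs
  imports Complex_Main
begin

definition simple_graph :: "'a set \<Rightarrow> 'a set set \<Rightarrow> bool" where
  "simple_graph V E \<longleftrightarrow> finite V \<and> (\<forall>e\<in>E. e \<subseteq> V \<and> card e = 2)"

definition adj :: "'a set set \<Rightarrow> 'a \<Rightarrow> 'a \<Rightarrow> bool" where
  "adj E x y \<longleftrightarrow> {x, y} \<in> E"

definition connected_graph :: "'a set \<Rightarrow> 'a set set \<Rightarrow> bool" where
  "connected_graph V E \<longleftrightarrow> V \<noteq> {} \<and> (\<forall>x\<in>V. \<forall>y\<in>V. (adj E)\<^sup>*\<^sup>* x y)"

definition unicyclic :: "'a set \<Rightarrow> 'a set set \<Rightarrow> bool" where
  "unicyclic V E \<longleftrightarrow> simple_graph V E \<and> connected_graph V E \<and> card E = card V"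

definition degree :: "'a set set \<Rightarrow> 'a \<Rightarrow> nat" where
  "degree E w = card {e \<in> E. w \<in> e}"

definition irr_t :: "'a set \<Rightarrow> 'a set set \<Rightarrow> real" where
  "irr_t V E = (1/2) * (\<Sum>x\<in>V. \<Sum>y\<in>V. \<bar>real (degree E x) - real (degree E y)\<bar>)"

definition cycle_edges :: "nat \<Rightarrow> nat set set" where
  "cycle_edges n = {{i, Suc i mod n} | i. i < n}"

definition iso_cycle :: "'a set \<Rightarrow> 'a set set \<Rightarrow> nat \<Rightarrow> bool" where
  "iso_cycle V E n \<longleftrightarrow> (\<exists>f. bij_betw f V {0..<n} \<and> (\<lambda>e. f ` e) ` E = cycle_edges n)"

end

theory Submission
  imports Defs
begin


definition nbrs :: "'a set set \<Rightarrow> 'a \<Rightarrow> 'a set" where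
  "nbrs E x = {y. {x, y} \<in> E}"

lemma sg_finE: "simple_graph V E \<Longrightarrow> finite E"
proof -
  assume "simple_graph V E"
  then have "E \<subseteq> Pow V" "finite V" unfolding simple_graph_def by blast+
  then show ?thesis by (meson finite_Pow_iff finite_subset)
qed

lemma sg_edge: "simple_graph V E \<Longrightarrow> {x, y} \<in> E \<Longrightarrow> x \<in> V \<and> y \<in> V \<and> x \<noteq> y"
proof -
  assume a: "simple_graph V E" "{x, y} \<in> E"
  then have "{x,y} \<subseteq> V" "card {x,y} = 2" unfolding simple_graph_def by blast+
  then show ?thesis by (cases "x = y") auto
qed

lemma handshake:
  assumes "simple_graph V E"
  shows "(\<Sum>v\<in>V. degree E v) = 2 * card E"
proof -
  have fE: "finite E" using sg_finE assms .
  have fV: "finite V" using assms unfolding simple_graph_def by blast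
  have "(\<Sum>v\<in>V. degree E v) = (\<Sum>v\<in>V. \<Sum>e\<in>E. if v \<in> e then 1 else 0)"
    unfolding degree_def using fE by (simp add: sum.inter_filter[symmetric])
  also have "\<dots> = (\<Sum>e\<in>E. \<Sum>v\<in>V. if v \<in> e then 1 else 0)" by (rule sum.swap)
  also have "\<dots> = (\<Sum>e\<in>E. card e)"
  proof (rule sum.cong[OF refl])
    fix e assume "e \<in> E"
    then have "e \<subseteq> V" using assms unfolding simple_graph_def by blast
    then have "{v \<in> V. v \<in> e} = e" by blast
    then show "(\<Sum>v\<in>V. if v \<in> e then 1 else 0) = card e"
      using fV by (simp add: sum.inter_filter[symmetric])
  qed
  also have "\<dots> = (\<Sum>e\<in>E. 2)"
    using assms unfolding simple_graph_def by (intro sum.cong) auto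
  finally show ?thesis by simp
qed

lemma degree_pos:
  assumes "connected_graph V E" "card V \<ge> 2" "v \<in> V" "simple_graph V E"
  shows "degree E v \<ge> 1"
proof -
  have fE: "finite E" using sg_finE assms(4) .
  have "V - {v} \<noteq> {}"
  proof
    assume "V - {v} = {}"
    then have "V \<subseteq> {v}" by blast
    then have "card V \<le> 1" using card_mono[of "{v}" V] by simp
    then show False using assms(2) by simp
  qed
  then obtain y where y: "y \<in> V" "y \<noteq> v" by blast
  have "(adj E)\<^sup>*\<^sup>* v y" using assms(1) y assms(3) unfolding connected_graph_def by blast
  then obtain z where "adj E v z"
    using y(2) by (metis converse_rtranclpE)
  then have "{v, z} \<in> {e \<in> E. v \<in> e}" unfolding adj_def by simp
  then have "{e \<in> E. v \<in> e} \<noteq> {}" by blast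
  then show ?thesis unfolding degree_def using fE
    by (simp add: Suc_le_eq card_gt_0_iff)
qed

lemma nbrs_card:
  assumes "degree E x = 2" "simple_graph V E"
  shows "card (nbrs E x) = 2"
proof -
  have "bij_betw (\<lambda>y. {x, y}) (nbrs E x) {e \<in> E. x \<in> e}"
  proof (rule bij_betw_imageI)
    show "inj_on (\<lambda>y. {x, y}) (nbrs E x)"
      by (rule inj_onI) (metis doubleton_eq_iff)
    show "(\<lambda>y. {x, y}) ` nbrs E x = {e \<in> E. x \<in> e}"
    proof
      show "(\<lambda>y. {x, y}) ` nbrs E x \<subseteq> {e \<in> E. x \<in> e}" unfolding nbrs_def by auto
      show "{e \<in> E. x \<in> e} \<subseteq> (\<lambda>y. {x, y}) ` nbrs E x"
      proof
        fix e assume e: "e \<in> {e \<in> E. x \<in> e}"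
        then have "card e = 2" using assms(2) unfolding simple_graph_def by blast
        then obtain p q where pq: "e = {p, q}" "p \<noteq> q" by (meson card_2_iff)
        then have "e = {x, p} \<or> e = {x, q}" using e by blast
        then show "e \<in> (\<lambda>y. {x, y}) ` nbrs E x" using e unfolding nbrs_def by auto
      qed
    qed
  qed
  then show ?thesis using assms unfolding degree_def by (simp add: bij_betw_same_card)
qed

lemma nbrs_two:
  assumes "card (nbrs E x) = 2" "u \<in> nbrs E x" "v \<in> nbrs E x" "u \<noteq> v" "w \<in> nbrs E x"
  shows "w = u \<or> w = v"
proof -
  obtain p q where "nbrs E x = {p, q}" using assms(1) by (meson card_2_iff)
  then show ?thesis using assms by auto
qed

lemma nbrs_ex1:
  assumes "card (nbrs E x) = 2" "u \<in> nbrs E x"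
  shows "\<exists>!z. z \<in> nbrs E x \<and> z \<noteq> u"
proof -
  obtain p q where "nbrs E x = {p, q}" "p \<noteq> q" using assms(1) by (meson card_2_iff)
  then show ?thesis using assms by auto
qed



fun walk :: "'a set set \<Rightarrow> 'a \<Rightarrow> 'a \<Rightarrow> nat \<Rightarrow> 'a" where
  "walk E a b 0 = a"
| "walk E a b (Suc 0) = b"
| "walk E a b (Suc (Suc k)) = (THE z. z \<in> nbrs E (walk E a b (Suc k)) \<and> z \<noteq> walk E a b k)"

context
  fixes V :: "'a set" and E :: "'a set set" and a b :: 'a
  assumes sg: "simple_graph V E" and reg: "\<forall>v\<in>V. degree E v = 2" and ab: "{a,b} \<in> E"
begin

lemma walk_SS:
  assumes "{walk E a b k, walk E a b (Suc k)} \<in> E"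
  shows "{walk E a b (Suc k), walk E a b (Suc (Suc k))} \<in> E \<and> walk E a b (Suc (Suc k)) \<noteq> walk E a b k"
proof -
  let ?x = "walk E a b (Suc k)" and ?u = "walk E a b k"
  have xV: "?x \<in> V" using sg_edge[OF sg assms] by blast
  have c: "card (nbrs E ?x) = 2" using nbrs_card[OF bspec[OF reg xV] sg] .
  have u: "?u \<in> nbrs E ?x" using assms unfolding nbrs_def by (simp add: insert_commute)
  have "walk E a b (Suc (Suc k)) \<in> nbrs E ?x \<and> walk E a b (Suc (Suc k)) \<noteq> ?u"
    unfolding walk.simps by (rule theI'[OF nbrs_ex1[OF c u]])
  then show ?thesis unfolding nbrs_def by simp
qed

lemma walk_edge: "{walk E a b k, walk E a b (Suc k)} \<in> E"
proof (induction k)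
  case 0 then show ?case using ab by simp
next
  case (Suc k) then show ?case using walk_SS by blast
qed

lemma walk_back: "walk E a b (Suc (Suc k)) \<noteq> walk E a b k"
  using walk_SS walk_edge by blast

lemma walk_V: "walk E a b k \<in> V"
  using sg_edge[OF sg walk_edge] by blast

lemma walk_ne: "walk E a b k \<noteq> walk E a b (Suc k)"
  using sg_edge[OF sg walk_edge] by blast

lemma walk_nbrs: "nbrs E (walk E a b (Suc k)) = {walk E a b k, walk E a b (Suc (Suc k))}"
proof -
  let ?x = "walk E a b (Suc k)"
  have c: "card (nbrs E ?x) = 2" using nbrs_card[OF bspec[OF reg walk_V] sg] .
  have u: "walk E a b k \<in> nbrs E ?x" using walk_edge[of k] unfolding nbrs_def by (simp add: insert_commute)
  have v: "walk E a b (Suc (Suc k)) \<in> nbrs E ?x" using walk_edge[of "Suc k"] unfolding nbrs_def by simp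
  show ?thesis using nbrs_two[OF c u v walk_back[symmetric]] u v by blast
qed


lemma walk_iso:
  assumes conn: "connected_graph V E" and cV: "card V = n" and n3: "n \<ge> 3"
  shows "iso_cycle V E n"
proof -
  define s where "s = walk E a b"
  have fV: "finite V" using sg unfolding simple_graph_def by blast
  have sV: "\<And>k. s k \<in> V" unfolding s_def by (rule walk_V)
  have sE: "\<And>k. {s k, s (Suc k)} \<in> E" unfolding s_def by (rule walk_edge)
  have sne: "\<And>k. s k \<noteq> s (Suc k)" unfolding s_def by (rule walk_ne)
  have sback: "\<And>k. s (Suc (Suc k)) \<noteq> s k" unfolding s_def by (rule walk_back)
  have snb: "\<And>k. nbrs E (s (Suc k)) = {s k, s (Suc (Suc k))}" unfolding s_def by (rule walk_nbrs)
  have ninj: "\<not> inj_on s {0..n}"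
  proof
    assume "inj_on s {0..n}"
    then have "card (s ` {0..n}) = Suc n" by (simp add: card_image)
    moreover have "card (s ` {0..n}) \<le> card V" using sV fV by (intro card_mono) auto
    ultimately show False using cV by simp
  qed
  define P where "P j \<longleftrightarrow> (\<exists>i<j. s i = s j)" for j
  obtain j0 where "P j0"
  proof -
    from ninj obtain x y where "x \<noteq> y" "s x = s y" unfolding inj_on_def by blast
    then have "P x \<or> P y" unfolding P_def by (metis linorder_neqE_nat)
    then show ?thesis using that by blast
  qed
  define j where "j = (LEAST j. P j)"
  have Pj: "P j" unfolding j_def by (rule LeastI[of P j0]) fact
  have inj: "inj_on s {0..<j}"
  proof (rule inj_onI)
    fix x y assume xy: "x \<in> {0..<j}" "y \<in> {0..<j}" "s x = s y"
    show "x = y"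
    proof (rule ccontr)
      assume "x \<noteq> y"
      then have "P x \<or> P y" using xy(3) unfolding P_def by (metis linorder_neqE_nat)
      then show False using xy(1,2) not_less_Least unfolding j_def by fastforce
    qed
  qed
  obtain i where ij: "i < j" "s i = s j" using Pj unfolding P_def by blast
  have i0: "i = 0"
  proof (rule ccontr)
    assume "i \<noteq> 0"
    then obtain i' where i': "i = Suc i'" by (cases i) auto
    obtain j' where j': "j = Suc j'" using ij by (cases j) auto
    have "s j' \<in> nbrs E (s j)" using sE[of j'] j' unfolding nbrs_def by (simp add: insert_commute)
    then have "s j' = s i' \<or> s j' = s (Suc i)" using snb[of i'] i' ij(2) by simp
    then show False
    proof
      assume "s j' = s i'"
      then show False using inj i' j' ij(1) unfolding inj_on_def by (metis Suc_less_SucD atLeastLessThan_iff less_Suc_eq zero_le less_irrefl)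
    next
      assume h: "s j' = s (Suc i)"
      consider "Suc i = j" | "Suc i = j'" | "Suc i < j'" using ij(1) j' by linarith
      then show False
      proof cases
        case 1 then show ?thesis using sne[of i] ij(2) by simp
      next
        case 2 then show ?thesis using sback[of i] h ij(2) j' by simp
      next
        case 3 then show ?thesis using inj h j' unfolding inj_on_def
          by (metis atLeastLessThan_iff lessI less_trans zero_le less_irrefl)
      qed
    qed
  qed
  have sj: "s j = s 0" using ij i0 by simp
  have j3: "j \<ge> 3"
  proof -
    have "j \<noteq> 0" using ij by simp
    moreover have "j \<noteq> 1" using sne[of 0] sj by auto
    moreover have "j \<noteq> 2" using sback[of 0] sj by (auto simp: numeral_2_eq_2)
    ultimately show ?thesis by linarith
  qed
  define C where "C = s ` {0..<j}"
  have closed: "y \<in> C" if xyC: "x \<in> C" "{x, y} \<in> E" for x y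
  proof -
    obtain k where k: "k < j" "x = s k" using xyC(1) unfolding C_def by auto
    have y: "y \<in> nbrs E (s k)" using xyC(2) k unfolding nbrs_def by simp
    show ?thesis
    proof (cases k)
      case 0
      have c: "card (nbrs E (s 0)) = 2" using nbrs_card[OF bspec[OF reg sV] sg] .
      have u: "s 1 \<in> nbrs E (s 0)" using sE[of 0] unfolding nbrs_def by simp
      obtain m where m: "j = Suc m" using j3 by (cases j) auto
      have v: "s m \<in> nbrs E (s 0)" using sE[of m] m sj unfolding nbrs_def by (simp add: insert_commute)
      have "s 1 \<noteq> s m" using inj m j3 unfolding inj_on_def
        by (metis One_nat_def atLeastLessThan_iff lessI less_trans numeral_3_eq_3 zero_le Suc_le_eq less_irrefl nat_neq_iff)
      then have "y = s 1 \<or> y = s m" using nbrs_two[OF c u v _ ] y 0 by blast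
      then show ?thesis unfolding C_def using m j3 by auto
    next
      case (Suc k')
      then have "y \<in> {s k', s (Suc k)}" using y snb[of k'] by simp
      moreover have "s (Suc k) \<in> C"
      proof (cases "Suc k < j")
        case True then show ?thesis unfolding C_def by auto
      next
        case False then have "Suc k = j" using k by simp
        then show ?thesis using sj k unfolding C_def by auto
      qed
      moreover have "s k' \<in> C" using k Suc unfolding C_def by auto
      ultimately show ?thesis by blast
    qed
  qed
  have VC: "V \<subseteq> C"
  proof
    fix y assume "y \<in> V"
    then have "(adj E)\<^sup>*\<^sup>* (s 0) y" using conn sV unfolding connected_graph_def by blast
    then show "y \<in> C"
    proof (induction rule: rtranclp_induct)
      case base then show ?case unfolding C_def using j3 by auto
    next
      case (step x z) then show ?case using closed unfolding adj_def by blast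
    qed
  qed
  have CV: "C = V" using VC sV unfolding C_def by auto
  have jn: "j = n" using CV cV inj unfolding C_def by (metis card_atLeastLessThan card_image diff_zero)
  have bij: "bij_betw s {0..<n} V" using inj CV jn unfolding C_def bij_betw_def by simp
  have smod: "s (Suc i mod n) = s (Suc i)" if "i < n" for i
  proof (cases "Suc i < n")
    case True then show ?thesis by simp
  next
    case False then have "Suc i = n" using that by simp
    then show ?thesis using sj jn by simp
  qed
  have Eeq: "E = (\<lambda>i. {s i, s (Suc i mod n)}) ` {0..<n}"
  proof
    show "(\<lambda>i. {s i, s (Suc i mod n)}) ` {0..<n} \<subseteq> E" using smod sE by auto
    show "E \<subseteq> (\<lambda>i. {s i, s (Suc i mod n)}) ` {0..<n}"
    proof
      fix e assume e: "e \<in> E"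
      then have "card e = 2" "e \<subseteq> V" using sg unfolding simple_graph_def by blast+
      then obtain x y where xy: "e = {x, y}" "x \<in> V" by (metis card_2_iff insert_subset)
      then obtain k where k: "k < n" "x = s k" using CV jn unfolding C_def by auto
      have y: "y \<in> nbrs E (s k)" using e xy k unfolding nbrs_def by simp
      have mem: "{s i, s (Suc i)} \<in> (\<lambda>i. {s i, s (Suc i mod n)}) ` {0..<n}" if "i < n" for i
        using smod[OF that] that by (intro image_eqI[of _ _ i]) auto
      show "e \<in> (\<lambda>i. {s i, s (Suc i mod n)}) ` {0..<n}"
      proof (cases k)
        case 0
        have c: "card (nbrs E (s 0)) = 2" using nbrs_card[OF bspec[OF reg sV] sg] .
        have u: "s 1 \<in> nbrs E (s 0)" using sE[of 0] unfolding nbrs_def by simp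
        obtain m where m: "n = Suc m" using n3 by (cases n) auto
        have v: "s m \<in> nbrs E (s 0)" using sE[of m] m sj jn unfolding nbrs_def by (simp add: insert_commute)
        have "s 1 \<noteq> s m" using inj m n3 jn unfolding inj_on_def
          by (metis One_nat_def atLeastLessThan_iff lessI less_trans numeral_3_eq_3 zero_le Suc_le_eq less_irrefl nat_neq_iff)
        then have "y = s 1 \<or> y = s m" using nbrs_two[OF c u v _ ] y 0 by blast
        then show ?thesis
        proof
          assume "y = s 1" then show ?thesis using mem[of 0] xy k 0 n3 by simp
        next
          assume "y = s m"
          then have "e = {s m, s (Suc m)}" using xy k 0 m sj jn by (auto simp: insert_commute)
          then show ?thesis using mem[of m] m by simp
        qed
      next
        case (Suc k')
        then have "y = s k' \<or> y = s (Suc k)" using y snb[of k'] by simp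
        then show ?thesis
        proof
          assume "y = s k'"
          then have "e = {s k', s (Suc k')}" using xy k Suc by (auto simp: insert_commute)
          then show ?thesis using mem[of k'] k Suc by simp
        next
          assume "y = s (Suc k)"
          then show ?thesis using mem[of k] k xy by simp
        qed
      qed
    qed
  qed
  define f where "f = inv_into {0..<n} s"
  have fb: "bij_betw f V {0..<n}" unfolding f_def using bij by (rule bij_betw_inv_into)
  have fs: "f (s i) = i" if "i < n" for i
    unfolding f_def using bij that by (simp add: bij_betw_def inv_into_f_f)
  have "(\<lambda>e. f ` e) ` E = (\<lambda>i. {i, Suc i mod n}) ` {0..<n}"
  proof -
    have "(\<lambda>e. f ` e) ` E = (\<lambda>i. f ` {s i, s (Suc i mod n)}) ` {0..<n}"
      unfolding Eeq image_image ..
    also have "\<dots> = (\<lambda>i. {i, Suc i mod n}) ` {0..<n}"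
      using n3 by (intro image_cong refl) (simp add: fs)
    finally show ?thesis .
  qed
  also have "\<dots> = cycle_edges n" unfolding cycle_edges_def by auto
  finally show ?thesis unfolding iso_cycle_def using fb by blast
qed

end


lemma cyc_deg:
  assumes "k < n" "n \<ge> 3"
  shows "card {e \<in> cycle_edges n. k \<in> e} \<le> 2"
proof -
  have "{e \<in> cycle_edges n. k \<in> e} \<subseteq> {{k, Suc k mod n}, {(k + n - 1) mod n, k}}"
  proof
    fix e assume "e \<in> {e \<in> cycle_edges n. k \<in> e}"
    then obtain i where i: "i < n" "e = {i, Suc i mod n}" "k \<in> e" unfolding cycle_edges_def by blast
    show "e \<in> {{k, Suc k mod n}, {(k + n - 1) mod n, k}}"
    proof (cases "k = i")
      case True then show ?thesis using i by simp
    next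
      case False
      then have k: "k = Suc i mod n" using i by auto
      show ?thesis
      proof (cases "Suc i < n")
        case True
        then have "k = Suc i" using k by simp
        then have "(k + n - 1) mod n = i" using i by simp
        then show ?thesis using i k by auto
      next
        case False
        then have "Suc i = n" using i by simp
        then have "k = 0" "(k + n - 1) mod n = i" using k i by auto
        then show ?thesis using i k by auto
      qed
    qed
  qed
  moreover have "card {{k, Suc k mod n}, {(k + n - 1) mod n, k}} \<le> 2" by (simp add: card_insert_if)
  ultimately show ?thesis by (meson card_mono finite.emptyI finite_insert order_trans)
qed

lemma iso_deg:
  assumes "iso_cycle V E n" "simple_graph V E" "v \<in> V" "n \<ge> 3"
  shows "degree E v \<le> 2"
proof -
  obtain f where f: "bij_betw f V {0..<n}" "(\<lambda>e. f ` e) ` E = cycle_edges n"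
    using assms(1) unfolding iso_cycle_def by blast
  have EP: "E \<subseteq> Pow V" using assms(2) unfolding simple_graph_def by blast
  have inj: "inj_on (image f) {e \<in> E. v \<in> e}"
  proof (rule inj_on_subset[OF inj_on_image_Pow[OF bij_betw_imp_inj_on[OF f(1)]]])
    show "{e \<in> E. v \<in> e} \<subseteq> Pow V" using EP by blast
  qed
  have fv: "f v < n" using f(1) assms(3) unfolding bij_betw_def by auto
  have sub: "image f ` {e \<in> E. v \<in> e} \<subseteq> {e \<in> cycle_edges n. f v \<in> e}" using f(2) by auto
  have fin: "finite (cycle_edges n)"
  proof -
    have "cycle_edges n = (\<lambda>i. {i, Suc i mod n}) ` {..<n}" unfolding cycle_edges_def by auto
    then show ?thesis by simp
  qed
  have "degree E v = card (image f ` {e \<in> E. v \<in> e})" unfolding degree_def using inj by (simp add: card_image)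
  also have "\<dots> \<le> card {e \<in> cycle_edges n. f v \<in> e}" using sub fin by (intro card_mono) auto
  also have "\<dots> \<le> 2" using cyc_deg fv assms(4) by blast
  finally show ?thesis .
qed

lemma sum_le_eq:
  assumes "finite V" "(\<Sum>v\<in>V. d v) = 2 * real (card V)" "\<forall>v\<in>V. d v \<le> (2::real)"
  shows "\<forall>v\<in>V. d v = 2"
proof -
  have "(\<Sum>v\<in>V. 2 - d v) = 0" using assms(2) by (simp add: sum_subtractf)
  then have "\<forall>v\<in>V. 2 - d v = 0" using assms(1,3) by (subst (asm) sum_nonneg_eq_0_iff) auto
  then show ?thesis by simp
qed

lemma sum_ge_eq:
  assumes "finite V" "(\<Sum>v\<in>V. d v) = 2 * real (card V)" "\<forall>v\<in>V. d v \<ge> (2::real)"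
  shows "\<forall>v\<in>V. d v = 2"
proof -
  have "(\<Sum>v\<in>V. d v - 2) = 0" using assms(2) by (simp add: sum_subtractf)
  then have "\<forall>v\<in>V. d v - 2 = 0" using assms(1,3) by (subst (asm) sum_nonneg_eq_0_iff) auto
  then show ?thesis by simp
qed



lemma reg_iso:
  assumes "simple_graph V E" "connected_graph V E" "\<forall>v\<in>V. degree E v = 2" "card V = n" "n \<ge> 3"
  shows "iso_cycle V E n"
proof -
  obtain v where v: "v \<in> V" using assms(2) unfolding connected_graph_def by blast
  have "card (nbrs E v) = 2" using nbrs_card[OF bspec[OF assms(3) v] assms(1)] .
  then obtain y where "y \<in> nbrs E v" by (metis card_2_iff insertI1)
  then have "{v, y} \<in> E" unfolding nbrs_def by simp
  then show ?thesis using walk_iso[OF assms(1) assms(3)] assms(2,4,5) by blast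
qed

theorem theorem9:
  fixes V :: "'a set" and E :: "'a set set" and n :: nat
  assumes "n \<ge> 3" and "card V = n" and "unicyclic V E"
  shows "(irr_t V E \<ge> 0 \<and> (irr_t V E = 0 \<longleftrightarrow> iso_cycle V E n)) \<and>
         (n \<ge> 4 \<and> \<not> iso_cycle V E n \<longrightarrow>
           irr_t V E \<ge> 2 * real n - 2 \<and>
           (irr_t V E = 2 * real n - 2 \<longleftrightarrow>
              card {w \<in> V. degree E w = 3} = 1 \<and>
              card {w \<in> V. degree E w = 2} = n - 2 \<and>
              card {w \<in> V. degree E w = 1} = 1))"
proof -
  have sg: "simple_graph V E" and conn: "connected_graph V E" and cE: "card E = card V"
    using assms(3) unfolding unicyclic_def by auto
  have fV: "finite V" using sg unfolding simple_graph_def by blast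
  define d where "d x = real (degree E x)" for x
  have dsum: "(\<Sum>v\<in>V. d v) = 2 * real (card V)"
  proof -
    have "(\<Sum>v\<in>V. degree E v) = 2 * card V" using handshake[OF sg] cE by simp
    then show ?thesis unfolding d_def by (metis of_nat_mult of_nat_numeral of_nat_sum)
  qed
  have dpos: "\<forall>v\<in>V. d v \<ge> 1" using degree_pos[OF conn _ _ sg] assms(1,2) unfolding d_def by auto
  have key: "iso_cycle V E n \<longleftrightarrow> (\<forall>v\<in>V. d v = 2)"
  proof
    assume "iso_cycle V E n"
    then have "\<forall>v\<in>V. d v \<le> 2" using iso_deg sg assms(1) unfolding d_def by fastforce
    then show "\<forall>v\<in>V. d v = 2" using sum_le_eq[OF fV dsum] by blast
  next
    assume "\<forall>v\<in>V. d v = 2"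
    then have "\<forall>v\<in>V. degree E v = 2" unfolding d_def by simp
    then show "iso_cycle V E n" using reg_iso[OF sg conn] assms(1,2) by blast
  qed
  define S where "S = (\<Sum>x\<in>V. \<Sum>y\<in>V. \<bar>d x - d y\<bar>)"
  have irr: "irr_t V E = S / 2" unfolding irr_t_def S_def d_def by simp
  have S0: "S \<ge> 0" unfolding S_def by (intro sum_nonneg) auto
  have S0iff: "S = 0 \<longleftrightarrow> (\<forall>x\<in>V. \<forall>y\<in>V. d x = d y)"
  proof -
    have "S = 0 \<longleftrightarrow> (\<forall>x\<in>V. (\<Sum>y\<in>V. \<bar>d x - d y\<bar>) = 0)"
      unfolding S_def using fV by (intro sum_nonneg_eq_0_iff) (auto intro: sum_nonneg)
    also have "\<dots> \<longleftrightarrow> (\<forall>x\<in>V. \<forall>y\<in>V. \<bar>d x - d y\<bar> = 0)"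
      using fV by (simp add: sum_nonneg_eq_0_iff)
    finally show ?thesis by simp
  qed
  have eq2: "(\<forall>x\<in>V. \<forall>y\<in>V. d x = d y) \<longleftrightarrow> (\<forall>v\<in>V. d v = 2)"
  proof
    assume h: "\<forall>x\<in>V. \<forall>y\<in>V. d x = d y"
    show "\<forall>v\<in>V. d v = 2"
    proof
      fix v assume v: "v \<in> V"
      have "(\<Sum>x\<in>V. d x) = (\<Sum>x\<in>V. d v)" using h v by (intro sum.cong) blast+
      then have "real (card V) * d v = 2 * real (card V)" using dsum by simp
      then show "d v = 2" using assms(1,2) by simp
    qed
  qed simp
  have part1: "irr_t V E \<ge> 0 \<and> (irr_t V E = 0 \<longleftrightarrow> iso_cycle V E n)"
  proof -
    have i0: "irr_t V E = 0 \<longleftrightarrow> S = 0" using irr by linarith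
    have "irr_t V E \<ge> 0" using irr S0 by simp
    then show ?thesis using i0 S0iff eq2 key by simp
  qed
  have part2: "irr_t V E \<ge> 2 * real n - 2 \<and>
           (irr_t V E = 2 * real n - 2 \<longleftrightarrow>
              card {w \<in> V. degree E w = 3} = 1 \<and>
              card {w \<in> V. degree E w = 2} = n - 2 \<and>
              card {w \<in> V. degree E w = 1} = 1)"
    if n4: "n \<ge> 4" and nc: "\<not> iso_cycle V E n"
  proof -
    have "\<not> (\<forall>v\<in>V. d v \<le> 2)" using sum_le_eq[OF fV dsum] key nc by blast
    then obtain a where a: "a \<in> V" "d a \<ge> 3" unfolding d_def by force
    have "\<not> (\<forall>v\<in>V. d v \<ge> 2)" using sum_ge_eq[OF fV dsum] key nc by blast
    then obtain b where b: "b \<in> V" "d b = 1" using dpos unfolding d_def by force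
    have ab: "a \<noteq> b" using a b by auto
    define W where "W = V - {a, b}"
    have VW: "V = insert a (insert b W)" "a \<notin> insert b W" "b \<notin> W" "finite W"
      using a b ab fV unfolding W_def by auto
    have cW: "card W = n - 2" using VW assms(2) ab by (simp add: card_insert_if)
    define T where "T = (\<Sum>x\<in>W. \<Sum>y\<in>W. \<bar>d x - d y\<bar>)"
    define h where "h y = \<bar>d a - d y\<bar> + \<bar>d y - d b\<bar>" for y
    have g: "(\<Sum>y\<in>V. \<bar>d x - d y\<bar>) = \<bar>d x - d a\<bar> + \<bar>d x - d b\<bar> + (\<Sum>y\<in>W. \<bar>d x - d y\<bar>)" for x
      using VW by (simp add: sum.insert)
    have Seq: "S = 2 * \<bar>d a - d b\<bar> + 2 * (\<Sum>y\<in>W. h y) + T"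
    proof -
      have "S = (\<Sum>y\<in>V. \<bar>d a - d y\<bar>) + (\<Sum>y\<in>V. \<bar>d b - d y\<bar>) + (\<Sum>x\<in>W. \<Sum>y\<in>V. \<bar>d x - d y\<bar>)"
        unfolding S_def using VW by (simp add: sum.insert add.assoc)
      also have "\<dots> = 2 * \<bar>d a - d b\<bar> + 2 * (\<Sum>y\<in>W. h y) + T"
        unfolding g T_def h_def
        by (simp add: sum.distrib sum_distrib_left abs_minus_commute algebra_simps)
      finally show ?thesis .
    qed
    have T0: "T \<ge> 0" unfolding T_def by (intro sum_nonneg) auto
    have hge: "h y \<ge> d a - d b" for y unfolding h_def by linarith
    have hsum: "(\<Sum>y\<in>W. h y) \<ge> real (n - 2) * (d a - d b)"
      using sum_mono[of W "\<lambda>_. d a - d b" h] hge cW by simp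
    have n2: "real (n - 2) = real n - 2" using n4 by simp
    have low: "S \<ge> 2 * (real n - 1) * (d a - d b) + T"
      using Seq hsum n2 a b by (simp add: algebra_simps)
    have ge: "irr_t V E \<ge> 2 * real n - 2"
    proof -
      have "(real n - 1) * (d a - d b) \<ge> (real n - 1) * 2" using a b n4 by (intro mult_left_mono) auto
      then show ?thesis using low T0 irr by (simp add: algebra_simps)
    qed
    have iff: "irr_t V E = 2 * real n - 2 \<longleftrightarrow>
              card {w \<in> V. degree E w = 3} = 1 \<and>
              card {w \<in> V. degree E w = 2} = n - 2 \<and>
              card {w \<in> V. degree E w = 1} = 1"
    proof
      assume eq: "irr_t V E = 2 * real n - 2"
      then have Sv: "S = 4 * real n - 4" using irr by simp
      have "(real n - 1) * (d a - d b) \<le> (real n - 1) * 2" using low T0 Sv by (simp add: algebra_simps)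
      moreover have "real n - 1 > 0" using n4 by simp
      ultimately have "d a - d b \<le> 2" by (meson mult_left_le_imp_le)
      then have da: "d a = 3" using a b by simp
      have "T = 0" using low T0 Sv da b by (simp add: algebra_simps)
      then have Tall: "\<forall>x\<in>W. \<forall>y\<in>W. d x = d y"
      proof -
        assume "T = 0"
        have eqv: "(\<Sum>x\<in>W. \<Sum>y\<in>W. \<bar>d x - d y\<bar>) = 0 \<longleftrightarrow> (\<forall>x\<in>W. (\<Sum>y\<in>W. \<bar>d x - d y\<bar>) = 0)"
          by (rule sum_nonneg_eq_0_iff[OF VW(4)]) (simp add: sum_nonneg)
        have inner: "\<forall>x\<in>W. (\<Sum>y\<in>W. \<bar>d x - d y\<bar>) = 0"
          using eqv \<open>T = 0\<close> unfolding T_def by blast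
        show ?thesis
        proof (intro ballI)
          fix x y assume xy: "x \<in> W" "y \<in> W"
          have eqv2: "(\<Sum>y\<in>W. \<bar>d x - d y\<bar>) = 0 \<longleftrightarrow> (\<forall>y\<in>W. \<bar>d x - d y\<bar> = 0)"
            by (rule sum_nonneg_eq_0_iff[OF VW(4)]) simp
          have "\<forall>y\<in>W. \<bar>d x - d y\<bar> = 0"
            using eqv2 inner xy(1) by blast
          then show "d x = d y" using xy(2) by simp
        qed
      qed
      have "W \<noteq> {}" using cW n4 by auto
      then obtain c where c: "c \<in> W" by blast
      have "(\<Sum>v\<in>V. d v) = d a + d b + (\<Sum>v\<in>W. d v)" using VW by simp
      also have "(\<Sum>v\<in>W. d v) = (\<Sum>v\<in>W. d c)" using Tall c by (intro sum.cong) blast+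
      finally have "2 * real n = 4 + (real n - 2) * d c" using dsum assms(2) da b cW n2 by simp
      then have "(real n - 2) * d c = (real n - 2) * 2" by (simp add: algebra_simps)
      moreover have "real n - 2 \<noteq> 0" using n4 by simp
      ultimately have dc: "d c = 2" by (metis mult_left_cancel)
      have "\<forall>w\<in>W. d w = 2"
      proof
        fix w assume "w \<in> W"
        then have "d w = d c" using Tall c by blast
        then show "d w = 2" using dc by simp
      qed
      then have W2: "\<forall>w\<in>W. degree E w = 2" unfolding d_def by simp
      have da': "degree E a = 3" and db': "degree E b = 1" using da b(2) unfolding d_def by simp_all
      have "{w \<in> V. degree E w = 3} = {a}" using W2 db' da' a VW by auto
      moreover have "{w \<in> V. degree E w = 2} = W" using W2 db' da' VW by auto
      moreover have "{w \<in> V. degree E w = 1} = {b}" using W2 db' da' b VW by auto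
      ultimately show "card {w \<in> V. degree E w = 3} = 1 \<and>
              card {w \<in> V. degree E w = 2} = n - 2 \<and>
              card {w \<in> V. degree E w = 1} = 1" using cW by simp
    next
      assume cs: "card {w \<in> V. degree E w = 3} = 1 \<and>
              card {w \<in> V. degree E w = 2} = n - 2 \<and>
              card {w \<in> V. degree E w = 1} = 1"
      define A3 where "A3 = {w \<in> V. degree E w = 3}"
      define A2 where "A2 = {w \<in> V. degree E w = 2}"
      define A1 where "A1 = {w \<in> V. degree E w = 1}"
      have fin: "finite A3" "finite A2" "finite A1" using fV unfolding A3_def A2_def A1_def by auto
      have "card (A3 \<union> A2 \<union> A1) = card A3 + card A2 + card A1"
      proof -
        have d1: "A3 \<inter> A2 = {}" "(A3 \<union> A2) \<inter> A1 = {}" unfolding A3_def A2_def A1_def by auto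
        have "card (A3 \<union> A2 \<union> A1) = card (A3 \<union> A2) + card A1"
          using fin d1 by (intro card_Un_disjoint) auto
        also have "card (A3 \<union> A2) = card A3 + card A2" using fin d1 by (intro card_Un_disjoint) auto
        finally show ?thesis .
      qed
      then have "card (A3 \<union> A2 \<union> A1) = card V" using cs n4 assms(2) unfolding A3_def A2_def A1_def by simp
      then have U: "A3 \<union> A2 \<union> A1 = V" using fV by (intro card_subset_eq) (auto simp: A3_def A2_def A1_def)
      then have "degree E a \<in> {1,2,3}" using a(1) unfolding A3_def A2_def A1_def by auto
      then have da': "degree E a = 3" using a(2) unfolding d_def by auto
      have db': "degree E b = 1" using b unfolding d_def by simp
      have aA3: "a \<in> A3" using a(1) da' unfolding A3_def by simp
      have bA1: "b \<in> A1" using b(1) db' unfolding A1_def by simp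
      have A3a: "A3 = {a}" using aA3 cs unfolding A3_def by (metis card_1_singletonE singletonD)
      have A1b: "A1 = {b}" using bA1 cs unfolding A1_def by (metis card_1_singletonE singletonD)
      have W2: "\<forall>w\<in>W. d w = 2"
      proof
        fix w assume w: "w \<in> W"
        then have "w \<in> A3 \<union> A2 \<union> A1" using U VW by auto
        then have "w \<in> A2" using A3a A1b w VW by auto
        then show "d w = 2" unfolding A2_def d_def by simp
      qed
      have "T = 0" unfolding T_def using W2 by simp
      moreover have "(\<Sum>y\<in>W. h y) = (\<Sum>y\<in>W. 2)" unfolding h_def using W2 da' db'
        by (intro sum.cong) (auto simp: d_def)
      ultimately have "S = 4 + 4 * real (n - 2)" using Seq da' db' cW unfolding d_def by simp
      then show "irr_t V E = 2 * real n - 2" using irr n2 by simp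
    qed
    show ?thesis using ge iff by blast
  qed
  show ?thesis using part1 part2 by blast
qed


end
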